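(* Let $A\subset\mathbb R^2$ be the closed triangle with vertices $(-1,-1),(1,0),(0,1)$. There exist compact convex domains $A_\epsilon\subset A$ $(\epsilon>0$ small$)$ with smooth boundaries, containing the origin in their interiors, with $\mathrm{area}(A\setminus A_\epsilon)=O(\epsilon^2)$, such that $(1-2\epsilon)^2/3\le\rho_{\rm sys}(\mathbb T^2\times A_\epsilon)\le 1/(3-O(\epsilon^2))$; in particular $\rho_{\rm sys}(\mathbb T^2\times A_\epsilon)\to\frac13$ as $\epsilon\to0$, so $\rho_{\rm sys}(\mathbb T^2\times A)=\frac13$.
   Context: $\mathbb T^2=\mathbb R^2/\mathbb Z^2$, $T^*\mathbb T^2=\mathbb T^2\times\mathbb R^2$, $\lambda_{\rm can}=p_1dq_1+p_2dq_2$. For a compact star-shaped $B\subset\mathbb R^2$ with smooth boundary, $\mathrm{sys}(\mathbb T^2\times\partial B)$ is the minimal action of a closed Reeb orbit of $\lambda_{\rm can}|_{\mathbb T^2\times\partial B}$, $\mathrm{vol}=\int\lambda_{\rm can}\wedge d\lambda_{\rm can}=2\,\mathrm{area}(B)$, and $\rho_{\rm sys}=\mathrm{sys}^2/\mathrm{vol}$. For non-smooth $\partial A$, $\rho_{\rm sys}(\mathbb T^2\times A)$ is defined as the limit of $\rho_{\rm sys}(\mathbb T^2\times A_\epsilon)$ along smoothings $A_\epsilon\to A$. *)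

theory Defs
  imports "HOL-Analysis.Analysis"
begin

(* R^2 is modelled as real \<times> real.  A point of T^*T^2 (lifted to the universal
   cover R^2 \<times> R^2) is a pair (q, p). *)

type_synonym pt2 = "real \<times> real"

definition dot2 :: "pt2 \<Rightarrow> pt2 \<Rightarrow> real" where
  "dot2 a b = fst a * fst b + snd a * snd b"

coinductive smooth2 :: "(pt2 \<Rightarrow> real) \<Rightarrow> bool" where
  "(\<And>x. (f has_derivative (\<lambda>h. fst h * f1 x + snd h * f2 x)) (at x))
    \<Longrightarrow> smooth2 f1 \<Longrightarrow> smooth2 f2 \<Longrightarrow> smooth2 f"

definition smooth_boundary :: "pt2 set \<Rightarrow> bool" where
  "smooth_boundary B \<longleftrightarrow> (\<exists>g. smooth2 g \<and> B = {x. g x \<le> 0} \<and>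
      (\<forall>x. g x = 0 \<longrightarrow> (\<exists>D. (g has_derivative D) (at x) \<and> D \<noteq> (\<lambda>_. 0))))"

definition lam_can :: "pt2 \<times> pt2 \<Rightarrow> pt2 \<times> pt2 \<Rightarrow> real" where
  "lam_can x v = dot2 (snd x) (fst v)"

definition dlam_can :: "pt2 \<times> pt2 \<Rightarrow> pt2 \<times> pt2 \<Rightarrow> real" where
  "dlam_can v w = dot2 (snd v) (fst w) - dot2 (snd w) (fst v)"

definition tangent_bd :: "pt2 set \<Rightarrow> pt2 \<Rightarrow> pt2 set" where
  "tangent_bd B p = {v. \<exists>c. (\<forall>s. c s \<in> frontier B) \<and> c 0 = p \<and>
                        (c has_vector_derivative v) (at 0)}"

definition tangent_hyp :: "pt2 set \<Rightarrow> pt2 \<times> pt2 \<Rightarrow> (pt2 \<times> pt2) set" where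
  "tangent_hyp B x = UNIV \<times> tangent_bd B (snd x)"

(* closed Reeb orbit of \<lambda>_can restricted to T^2 \<times> \<partial>B, of period T,
   lifted to R^2 \<times> R^2 (closed modulo Z^2 in q) *)
definition closed_reeb_orbit :: "pt2 set \<Rightarrow> (real \<Rightarrow> pt2 \<times> pt2) \<Rightarrow> real \<Rightarrow> bool" where
  "closed_reeb_orbit B \<gamma> T \<longleftrightarrow> T > 0 \<and>
     (\<forall>t\<in>{0..T}.
        \<gamma> differentiable (at t within {0..T}) \<and>
        snd (\<gamma> t) \<in> frontier B \<and>
        vector_derivative \<gamma> (at t within {0..T}) \<in> tangent_hyp B (\<gamma> t) \<and>
        lam_can (\<gamma> t) (vector_derivative \<gamma> (at t within {0..T})) = 1 \<and>
        (\<forall>w\<in>tangent_hyp B (\<gamma> t). dlam_can (vector_derivative \<gamma> (at t within {0..T})) w = 0)) \<and>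
     snd (\<gamma> T) = snd (\<gamma> 0) \<and>
     fst (fst (\<gamma> T)) - fst (fst (\<gamma> 0)) \<in> \<int> \<and>
     snd (fst (\<gamma> T)) - snd (fst (\<gamma> 0)) \<in> \<int>"

definition reeb_action :: "(real \<Rightarrow> pt2 \<times> pt2) \<Rightarrow> real \<Rightarrow> real" where
  "reeb_action \<gamma> T = integral {0..T} (\<lambda>t. lam_can (\<gamma> t) (vector_derivative \<gamma> (at t within {0..T})))"

definition sys :: "pt2 set \<Rightarrow> real" where
  "sys B = Inf {reeb_action \<gamma> T | \<gamma> T. closed_reeb_orbit B \<gamma> T}"

(* vol(T^2 \<times> \<partial>B) = 2 area(B) *)
definition rho_sys :: "pt2 set \<Rightarrow> real" where
  "rho_sys B = (sys B)\<^sup>2 / (2 * measure lebesgue B)"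

definition triangleA :: "pt2 set" where
  "triangleA = convex hull {(-1,-1), (1,0), (0,1)}"

end

theory Submission
  imports Defs "HOL-Analysis.Analysis"
begin

inductive EC :: "(pt2 \<Rightarrow> real) \<Rightarrow> bool" where
  EC_exp: "EC (\<lambda>x. c * exp (a * fst x + d * snd x))"
| EC_add: "EC f \<Longrightarrow> EC g \<Longrightarrow> EC (\<lambda>x. f x + g x)"

lemma EC_deriv:
  assumes "EC f"
  shows "\<exists>f1 f2. EC f1 \<and> EC f2 \<and> (\<forall>x. (f has_derivative (\<lambda>h. fst h * f1 x + snd h * f2 x)) (at x))"
  using assms
proof induction
  case (EC_exp c a d)
  show ?case
  proof (intro exI conjI allI)
    show "EC (\<lambda>x. (c*a) * exp (a * fst x + d * snd x))" by (rule EC.EC_exp)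
    show "EC (\<lambda>x. (c*d) * exp (a * fst x + d * snd x))" by (rule EC.EC_exp)
    fix x :: pt2
    show "((\<lambda>x. c * exp (a * fst x + d * snd x)) has_derivative
       (\<lambda>h. fst h * ((c*a) * exp (a * fst x + d * snd x)) + snd h * ((c*d) * exp (a * fst x + d * snd x)))) (at x)"
      apply (rule has_derivative_eq_rhs)
       apply (rule derivative_eq_intros refl)+
      apply (simp add: fun_eq_iff algebra_simps)
      done
  qed
next
  case (EC_add f g)
  then obtain f1 f2 g1 g2 where "EC f1" "EC f2" "EC g1" "EC g2"
    and df: "\<And>x. (f has_derivative (\<lambda>h. fst h * f1 x + snd h * f2 x)) (at x)"
    and dg: "\<And>x. (g has_derivative (\<lambda>h. fst h * g1 x + snd h * g2 x)) (at x)" by blast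
  show ?case
  proof (intro exI conjI allI)
    show "EC (\<lambda>x. f1 x + g1 x)" by (rule EC.EC_add) fact+
    show "EC (\<lambda>x. f2 x + g2 x)" by (rule EC.EC_add) fact+
    fix x
    show "((\<lambda>x. f x + g x) has_derivative (\<lambda>h. fst h * (f1 x + g1 x) + snd h * (f2 x + g2 x))) (at x)"
      apply (rule has_derivative_eq_rhs)
       apply (rule has_derivative_add[OF df dg])
      apply (simp add: fun_eq_iff algebra_simps)
      done
  qed
qed

lemma EC_smooth: "EC f \<Longrightarrow> smooth2 f"
proof (coinduction arbitrary: f rule: smooth2.coinduct)
  case (smooth2 f)
  then show ?case using EC_deriv[OF smooth2] by blast
qed


definition L1 :: "pt2 \<Rightarrow> real" where "L1 x = fst x + snd x"
definition L2 :: "pt2 \<Rightarrow> real" where "L2 x = fst x - 2 * snd x"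
definition L3 :: "pt2 \<Rightarrow> real" where "L3 x = snd x - 2 * fst x"

definition GG :: "real \<Rightarrow> pt2 \<Rightarrow> real" where
  "GG b x = exp (b * L1 x) + exp (b * L2 x) + exp (b * L3 x) - exp b"
definition G1 :: "real \<Rightarrow> pt2 \<Rightarrow> real" where
  "G1 b x = b * (exp (b * L1 x) + exp (b * L2 x) - 2 * exp (b * L3 x))"
definition G2 :: "real \<Rightarrow> pt2 \<Rightarrow> real" where
  "G2 b x = b * (exp (b * L1 x) - 2 * exp (b * L2 x) + exp (b * L3 x))"

definition Abody :: "real \<Rightarrow> pt2 set" where "Abody b = {x. GG b x \<le> 0}"

lemma GG_deriv: "(GG b has_derivative (\<lambda>h. fst h * G1 b x + snd h * G2 b x)) (at x)"
  unfolding GG_def G1_def G2_def L1_def L2_def L3_def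
  apply (rule has_derivative_eq_rhs)
   apply (rule derivative_eq_intros refl)+
  apply (simp add: fun_eq_iff algebra_simps)
  done

lemma GG_cont: "continuous_on S (GG b)"
  by (rule continuous_at_imp_continuous_on, rule ballI, rule has_derivative_continuous, rule GG_deriv)


lemma GG_EC: "EC (GG b)"
proof -
  have eq: "GG b = (\<lambda>x. ((\<lambda>x. (\<lambda>x. 1 * exp (b * fst x + b * snd x)) x + (\<lambda>x. 1 * exp (b * fst x + (-2*b) * snd x)) x) x
          + (\<lambda>x. 1 * exp ((-2*b) * fst x + b * snd x)) x) + (\<lambda>x. (- exp b) * exp (0 * fst x + 0 * snd x)) x)"
    unfolding GG_def L1_def L2_def L3_def by (simp add: fun_eq_iff algebra_simps)
  show ?thesis unfolding eq by (rule EC_add EC_exp)+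
qed
lemma exp_tangent: "exp (v::real) * (1 + (u - v)) \<le> exp u"
proof -
  have "exp u = exp v * exp (u - v)" by (simp add: exp_diff)
  moreover have "1 + (u - v) \<le> exp (u - v)" by (rule exp_ge_add_one_self)
  ultimately show ?thesis by simp
qed

lemma alg_id: "b*(E1+E2-2*E3)*u1 + b*(E1-2*E2+E3)*u2 = E1*(b*(u1+u2)) + E2*(b*(u1-2*u2)) + E3*(b*(u2-2*u1))"
  for b E1 E2 E3 u1 u2 :: real
  by (simp add: algebra_simps)

lemma lin3: "A1 + D1 \<le> B1 \<Longrightarrow> A2 + D2 \<le> B2 \<Longrightarrow> A3 + D3 \<le> B3 \<Longrightarrow> S = D1 + D2 + D3 \<Longrightarrow>
   (A1 + A2 + A3 - c) + S \<le> B1 + B2 + B3 - c" for A1 A2 A3 B1 B2 B3 D1 D2 D3 S c :: real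
  by linarith

lemma GG_tangent:
  "GG b x + (G1 b x * (fst y - fst x) + G2 b x * (snd y - snd x)) \<le> GG b y"
proof -
  have a: "exp (b*L1 x) * (1 + (b*L1 y - b*L1 x)) \<le> exp (b*L1 y)" by (rule exp_tangent)
  have b: "exp (b*L2 x) * (1 + (b*L2 y - b*L2 x)) \<le> exp (b*L2 y)" by (rule exp_tangent)
  have c: "exp (b*L3 x) * (1 + (b*L3 y - b*L3 x)) \<le> exp (b*L3 y)" by (rule exp_tangent)
  have e1: "b*L1 y - b*L1 x = b*((fst y - fst x) + (snd y - snd x))" unfolding L1_def by (simp add: algebra_simps)
  have e2: "b*L2 y - b*L2 x = b*((fst y - fst x) - 2*(snd y - snd x))" unfolding L2_def by (simp add: algebra_simps)
  have e3: "b*L3 y - b*L3 x = b*((snd y - snd x) - 2*(fst y - fst x))" unfolding L3_def by (simp add: algebra_simps)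
  have eq: "G1 b x * (fst y - fst x) + G2 b x * (snd y - snd x) =
     exp (b*L1 x) * (b*L1 y - b*L1 x) + exp (b*L2 x) * (b*L2 y - b*L2 x) + exp (b*L3 x) * (b*L3 y - b*L3 x)"
    unfolding e1 e2 e3 G1_def G2_def by (rule alg_id)
  moreover have abc: "exp (b*L1 x) + exp (b*L1 x) * (b*L1 y - b*L1 x) \<le> exp (b*L1 y)"
    "exp (b*L2 x) + exp (b*L2 x) * (b*L2 y - b*L2 x) \<le> exp (b*L2 y)"
    "exp (b*L3 x) + exp (b*L3 x) * (b*L3 y - b*L3 x) \<le> exp (b*L3 y)"
    using a b c by (simp_all only: distrib_left mult_1_right)
  show ?thesis unfolding GG_def by (rule lin3[OF abc eq])
qed

lemma lin3c: "X1 \<le> (1-t)*a1 + t*c1 \<Longrightarrow> X2 \<le> (1-t)*a2 + t*c2 \<Longrightarrow> X3 \<le> (1-t)*a3 + t*c3 \<Longrightarrow>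
  X1 + X2 + X3 - e \<le> (1-t)*(a1+a2+a3-e) + t*(c1+c2+c3-e)" for X1 X2 X3 a1 a2 a3 c1 c2 c3 e t :: real
  by (simp add: algebra_simps)

lemma GG_convex: "convex_on UNIV (GG b)"
proof (rule convex_onI)
  fix t :: real and x y :: pt2
  assume t: "0 < t" "t < 1"
  have c: "exp (b * Li ((1 - t) *\<^sub>R x + t *\<^sub>R y)) \<le> (1 - t) * exp (b * Li x) + t * exp (b * Li y)"
    if lin: "\<And>x y. Li ((1 - t) *\<^sub>R x + t *\<^sub>R y) = (1-t) * Li x + t * Li y" for Li
  proof -
    have "exp (b * Li ((1 - t) *\<^sub>R x + t *\<^sub>R y)) = exp ((1-t) * (b * Li x) + t * (b * Li y))"
      by (simp only: lin) (simp add: algebra_simps)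
    also have "\<dots> \<le> (1 - t) * exp (b * Li x) + t * exp (b * Li y)"
      using convex_onD[OF exp_convex, of t "b * Li x" "b * Li y"] t
      by simp
    finally show ?thesis .
  qed
  have h1: "exp (b * L1 ((1 - t) *\<^sub>R x + t *\<^sub>R y)) \<le> (1 - t) * exp (b * L1 x) + t * exp (b * L1 y)"
    by (rule c) (simp add: L1_def algebra_simps)
  have h2: "exp (b * L2 ((1 - t) *\<^sub>R x + t *\<^sub>R y)) \<le> (1 - t) * exp (b * L2 x) + t * exp (b * L2 y)"
    by (rule c) (simp add: L2_def algebra_simps)
  have h3: "exp (b * L3 ((1 - t) *\<^sub>R x + t *\<^sub>R y)) \<le> (1 - t) * exp (b * L3 x) + t * exp (b * L3 y)"
    by (rule c) (simp add: L3_def algebra_simps)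
  show "GG b ((1 - t) *\<^sub>R x + t *\<^sub>R y) \<le> (1 - t) * GG b x + t * GG b y"
    unfolding GG_def by (rule lin3c[OF h1 h2 h3])
qed simp


lemma GG0: "GG b 0 = 3 - exp b"
  unfolding GG_def L1_def L2_def L3_def by simp

lemma expb_gt3: "(b::real) > 2 \<Longrightarrow> exp b > 3"
  using exp_ge_add_one_self[of b] by linarith

lemma grad_dot_ge:
  assumes "GG b z = 0"
  shows "G1 b z * fst z + G2 b z * snd z \<ge> exp b - 3"
  using GG_tangent[of b z 0] assms GG0[of b] by simp

lemma ray_pos:
  assumes "b > 2" "GG b z = 0" "l > 1"
  shows "GG b (l *\<^sub>R z) > 0"
proof -
  have "GG b z + (G1 b z * (fst (l *\<^sub>R z) - fst z) + G2 b z * (snd (l *\<^sub>R z) - snd z)) \<le> GG b (l *\<^sub>R z)"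
    by (rule GG_tangent)
  moreover have "G1 b z * (fst (l *\<^sub>R z) - fst z) + G2 b z * (snd (l *\<^sub>R z) - snd z)
      = (l - 1) * (G1 b z * fst z + G2 b z * snd z)" by (simp add: algebra_simps)
  moreover have "(l - 1) * (G1 b z * fst z + G2 b z * snd z) > 0"
    using grad_dot_ge[OF assms(2)] expb_gt3[OF assms(1)] assms(3) by (simp add: mult_pos_pos)
  ultimately show ?thesis using assms(2) by linarith
qed

lemma triangle_eq: "triangleA = {x. L1 x \<le> 1 \<and> L2 x \<le> 1 \<and> L3 x \<le> 1}"
proof -
  have "triangleA = {u *\<^sub>R ((-1,-1)::pt2) + v *\<^sub>R ((1,0)::pt2) + w *\<^sub>R ((0,1)::pt2) | u v w :: real.
     0 \<le> u \<and> 0 \<le> v \<and> 0 \<le> w \<and> u + v + w = 1}"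
    unfolding triangleA_def by (rule convex_hull_3)
  also have "\<dots> = {x. L1 x \<le> 1 \<and> L2 x \<le> 1 \<and> L3 x \<le> 1}"
  proof (intro equalityI subsetI)
    fix x assume "x \<in> {u *\<^sub>R ((-1,-1)::pt2) + v *\<^sub>R ((1,0)::pt2) + w *\<^sub>R ((0,1)::pt2) | u v w :: real.
     0 \<le> u \<and> 0 \<le> v \<and> 0 \<le> w \<and> u + v + w = 1}"
    then obtain u v w :: real where "0 \<le> u" "0 \<le> v" "0 \<le> w" "u + v + w = 1"
      and x: "x = u *\<^sub>R (-1,-1) + v *\<^sub>R (1,0) + w *\<^sub>R (0,1)" by blast
    then show "x \<in> {x. L1 x \<le> 1 \<and> L2 x \<le> 1 \<and> L3 x \<le> 1}"
      unfolding L1_def L2_def L3_def by auto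
  next
    fix x :: pt2 assume "x \<in> {x. L1 x \<le> 1 \<and> L2 x \<le> 1 \<and> L3 x \<le> 1}"
    then have h: "L1 x \<le> 1" "L2 x \<le> 1" "L3 x \<le> 1" by auto
    define u where "u = (1 - L1 x) / 3"
    define v where "v = (1 - L3 x) / 3"
    define w where "w = (1 - L2 x) / 3"
    have "0 \<le> u" "0 \<le> v" "0 \<le> w" using h unfolding u_def v_def w_def by auto
    moreover have "u + v + w = 1" unfolding u_def v_def w_def L1_def L2_def L3_def by (simp add: field_simps)
    moreover have "x = u *\<^sub>R (-1,-1) + v *\<^sub>R (1,0) + w *\<^sub>R (0,1)"
      unfolding u_def v_def w_def L1_def L2_def L3_def by (simp add: prod_eq_iff field_simps)
    ultimately show "x \<in> {u *\<^sub>R ((-1,-1)::pt2) + v *\<^sub>R ((1,0)::pt2) + w *\<^sub>R ((0,1)::pt2) | u v w :: real.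
     0 \<le> u \<and> 0 \<le> v \<and> 0 \<le> w \<and> u + v + w = 1}" by blast
  qed
  finally show ?thesis .
qed

lemma Abody_sub:
  assumes "b > 0" "x \<in> Abody b"
  shows "L1 x < 1" "L2 x < 1" "L3 x < 1"
proof -
  have g: "exp (b * L1 x) + exp (b * L2 x) + exp (b * L3 x) \<le> exp b"
    using assms(2) unfolding Abody_def GG_def by simp
  have p: "exp (b * L1 x) > 0" "exp (b * L2 x) > 0" "exp (b * L3 x) > 0" by auto
  have "exp (b * L1 x) < exp b" "exp (b * L2 x) < exp b" "exp (b * L3 x) < exp b"
    using g p by linarith+
  then have "b * L1 x < b * 1" "b * L2 x < b * 1" "b * L3 x < b * 1" by auto
  then show "L1 x < 1" "L2 x < 1" "L3 x < 1" using assms(1) by (simp_all add: mult_less_cancel_left_pos)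
qed

lemma Abody_subset: "b > 0 \<Longrightarrow> Abody b \<subseteq> triangleA"
  unfolding triangle_eq using Abody_sub by (auto simp: less_imp_le)

lemma triangle_compact: "compact triangleA"
  unfolding triangleA_def by (rule finite_imp_compact_convex_hull) simp

lemma Abody_closed: "closed (Abody b)"
  unfolding Abody_def by (rule closed_Collect_le[OF GG_cont continuous_on_const])

lemma Abody_compact: "b > 0 \<Longrightarrow> compact (Abody b)"
  using Abody_closed Abody_subset triangle_compact
  by (meson bounded_subset compact_eq_bounded_closed)

lemma Abody_convex: "convex (Abody b)"
proof (rule convexI)
  fix x y :: pt2 and u v :: real
  assume "x \<in> Abody b" "y \<in> Abody b" "0 \<le> u" "0 \<le> v" "u + v = 1"
  then show "u *\<^sub>R x + v *\<^sub>R y \<in> Abody b"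
    using convex_lower[OF GG_convex, of x y u v b] unfolding Abody_def by auto
qed


lemma open_neg: "open {x. GG b x < 0}"
  by (rule open_Collect_less[OF GG_cont continuous_on_const])

lemma neg_interior: "GG b x < 0 \<Longrightarrow> x \<in> interior (Abody b)"
proof -
  assume "GG b x < 0"
  moreover have "{x. GG b x < 0} \<subseteq> interior (Abody b)"
    by (rule interior_maximal) (auto simp: Abody_def open_neg)
  ultimately show ?thesis by auto
qed

lemma zero_interior: "b > 2 \<Longrightarrow> (0,0) \<in> interior (Abody b)"
  using neg_interior[of b 0] GG0[of b] expb_gt3[of b] by (simp add: zero_prod_def)

lemma frontier_Abody:
  assumes "b > 2"
  shows "frontier (Abody b) = {x. GG b x = 0}"
proof (intro equalityI subsetI)
  fix x assume x: "x \<in> frontier (Abody b)"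
  then have "x \<in> Abody b" using Abody_closed frontier_subset_closed by blast
  then have "GG b x \<le> 0" by (simp add: Abody_def)
  moreover have "\<not> GG b x < 0" using neg_interior[of b x] x by (auto simp: frontier_def)
  ultimately show "x \<in> {x. GG b x = 0}" by simp
next
  fix x assume "x \<in> {x. GG b x = 0}"
  then have x0: "GG b x = 0" by simp
  have "x \<noteq> 0" using x0 GG0[of b] expb_gt3[OF assms] by auto
  have "x \<notin> interior (Abody b)"
  proof
    assume "x \<in> interior (Abody b)"
    then obtain e where e: "e > 0" "ball x e \<subseteq> Abody b" using mem_interior by blast
    define l where "l = 1 + e / (2 * norm x)"
    have nx: "norm x > 0" using \<open>x \<noteq> 0\<close> by simp
    have l1: "l > 1" unfolding l_def using e nx by simp
    have "dist x (l *\<^sub>R x) = (l - 1) * norm x"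
    proof -
      have "x - l *\<^sub>R x = (1 - l) *\<^sub>R x" by (simp add: algebra_simps)
      then show ?thesis using l1 by (simp add: dist_norm)
    qed
    also have "\<dots> = e / 2" unfolding l_def using nx by simp
    finally have "l *\<^sub>R x \<in> ball x e" using e by simp
    then have "GG b (l *\<^sub>R x) \<le> 0" using e by (auto simp: Abody_def)
    with ray_pos[OF assms x0 l1] show False by simp
  qed
  moreover have "x \<in> closure (Abody b)" using x0 closure_subset by (force simp: Abody_def)
  ultimately show "x \<in> frontier (Abody b)" by (simp add: frontier_def)
qed

lemma grad_nonzero:
  assumes "b > 2" "GG b p = 0"
  shows "(G1 b p, G2 b p) \<noteq> (0, 0)"
  using grad_dot_ge[OF assms(2)] expb_gt3[OF assms(1)] by auto

lemma Abody_smooth: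
  assumes b: "b > 2"
  shows "smooth_boundary (Abody b)"
proof -
  have reg: "\<exists>D. (GG b has_derivative D) (at x) \<and> D \<noteq> (\<lambda>_. 0)" if x: "GG b x = 0" for x
  proof (intro exI conjI)
    show "(GG b has_derivative (\<lambda>h. fst h * G1 b x + snd h * G2 b x)) (at x)" by (rule GG_deriv)
    show "(\<lambda>h. fst h * G1 b x + snd h * G2 b x) \<noteq> (\<lambda>_. 0)"
    proof
      assume "(\<lambda>h. fst h * G1 b x + snd h * G2 b x) = (\<lambda>_. 0)"
      then have "fst x * G1 b x + snd x * G2 b x = 0" by metis
      with grad_dot_ge[OF x] expb_gt3[OF b] show False by (simp add: mult.commute)
    qed
  qed
  show ?thesis unfolding smooth_boundary_def
    by (rule exI[of _ "GG b"]) (auto simp: Abody_def EC_smooth[OF GG_EC] reg)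
qed


lemma tangent_exists:
  assumes b: "b > 2" and p: "GG b p = 0"
  shows "(- G2 b p, G1 b p) \<in> tangent_bd (Abody b) p"
proof -
  define \<tau> where "\<tau> = (- G2 b p, G1 b p)"
  define y where "y = (\<lambda>s::real. p + s *\<^sub>R \<tau>)"
  define K where "K = exp b - 3"
  have K: "K > 0" unfolding K_def using expb_gt3[OF b] by simp
  have ynn: "GG b (y s) \<ge> 0" for s
  proof -
    have "GG b p + (G1 b p * (fst (y s) - fst p) + G2 b p * (snd (y s) - snd p)) \<le> GG b (y s)"
      by (rule GG_tangent)
    moreover have "G1 b p * (fst (y s) - fst p) + G2 b p * (snd (y s) - snd p) = 0"
      unfolding y_def \<tau>_def by (simp add: algebra_simps)
    ultimately show ?thesis using p by simp
  qed
  have ex: "\<exists>r. 0 < r \<and> r \<le> 1 \<and> GG b (r *\<^sub>R y s) = 0" for s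
  proof -
    have "continuous_on {0..1} (GG b \<circ> (\<lambda>r. r *\<^sub>R y s))"
      by (intro continuous_on_compose continuous_intros GG_cont)
    then have "continuous_on {0..1} (\<lambda>r. GG b (r *\<^sub>R y s))" by (simp add: o_def)
    moreover have "GG b (0 *\<^sub>R y s) \<le> 0" using GG0[of b] expb_gt3[OF b] by simp
    moreover have "0 \<le> GG b (1 *\<^sub>R y s)" using ynn by simp
    ultimately obtain r where r: "0 \<le> r" "r \<le> 1" "GG b (r *\<^sub>R y s) = 0"
      using IVT'[of "\<lambda>r. GG b (r *\<^sub>R y s)" 0 0 1] by auto
    have "r \<noteq> 0" using r(3) GG0[of b] expb_gt3[OF b] by auto
    then show ?thesis using r by (intro exI[of _ r]) auto
  qed
  define R where "R s = (SOME r. 0 < r \<and> r \<le> 1 \<and> GG b (r *\<^sub>R y s) = 0)" for s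
  have R: "0 < R s" "R s \<le> 1" "GG b (R s *\<^sub>R y s) = 0" for s
    using someI_ex[OF ex[of s]] unfolding R_def by auto
  define c where "c s = R s *\<^sub>R y s" for s
  have cf: "c s \<in> frontier (Abody b)" for s
    using R(3)[of s] frontier_Abody[OF b] unfolding c_def by simp
  have y0: "y 0 = p" unfolding y_def by simp
  have R0: "R 0 = 1"
  proof (rule ccontr)
    assume "R 0 \<noteq> 1"
    then have lt: "R 0 < 1" using R(2)[of 0] by simp
    have "1 / R 0 > 1" using lt R(1)[of 0] by simp
    from ray_pos[OF b R(3)[of 0] this] have "GG b ((1 / R 0) *\<^sub>R (R 0 *\<^sub>R y 0)) > 0" .
    moreover have "(1 / R 0) *\<^sub>R (R 0 *\<^sub>R y 0) = p" using R(1)[of 0] y0 by simp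
    ultimately show False using p by simp
  qed
  have c0: "c 0 = p" unfolding c_def R0 y0 by simp
  have bound: "(1 - R s) * K \<le> GG b (y s)" for s
  proof -
    define z where "z = R s *\<^sub>R y s"
    define r where "r = R s"
    have r: "0 < r" "r \<le> 1" using R[of s] unfolding r_def by auto
    have z0: "GG b z = 0" using R(3)[of s] unfolding z_def .
    have ys: "y s = (1 / r) *\<^sub>R z" unfolding z_def r_def using R(1)[of s] by simp
    have "GG b z + (G1 b z * (fst (y s) - fst z) + G2 b z * (snd (y s) - snd z)) \<le> GG b (y s)"
      by (rule GG_tangent)
    moreover have "G1 b z * (fst (y s) - fst z) + G2 b z * (snd (y s) - snd z)
        = (1 / r - 1) * (G1 b z * fst z + G2 b z * snd z)"
      unfolding ys by (simp add: algebra_simps)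
    moreover have "(1 / r - 1) * (G1 b z * fst z + G2 b z * snd z) \<ge> (1 / r - 1) * K"
      using grad_dot_ge[OF z0] r unfolding K_def by (intro mult_left_mono) (auto simp: field_simps)
    moreover have "(1 / r - 1) * K \<ge> (1 - r) * K"
    proof -
      have "1 / r - 1 - (1 - r) = (1 - r) * (1 - r) / r" using r by (simp add: field_simps)
      also have "\<dots> \<ge> 0" using r by simp
      finally show ?thesis using K by (intro mult_right_mono) auto
    qed
    ultimately show ?thesis using z0 unfolding r_def by linarith
  qed
  have dphi: "((\<lambda>h. GG b (y h)) has_derivative (\<lambda>h. 0)) (at 0)"
  proof -
    have dy: "(y has_derivative (\<lambda>h. h *\<^sub>R \<tau>)) (at 0)"
      unfolding y_def by (rule derivative_eq_intros refl)+ simp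
    have "((\<lambda>h. GG b (y h)) has_derivative (\<lambda>h. fst (h *\<^sub>R \<tau>) * G1 b (y 0) + snd (h *\<^sub>R \<tau>) * G2 b (y 0))) (at 0)"
      by (rule has_derivative_compose[OF dy GG_deriv])
    then show ?thesis
      by (rule has_derivative_eq_rhs) (simp add: y0 \<tau>_def fun_eq_iff algebra_simps)
  qed
  then have lim1: "((\<lambda>h. \<bar>GG b (y h)\<bar> / \<bar>h\<bar>) \<longlongrightarrow> 0) (at 0)"
    unfolding has_derivative_at using p y0 by simp
  have lim2: "((\<lambda>h. norm (y h) / K) \<longlongrightarrow> norm p / K) (at 0)"
  proof -
    have "(y \<longlongrightarrow> y 0) (at 0)" unfolding y_def by (intro tendsto_intros)
    then show ?thesis using y0 K by (intro tendsto_intros) auto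
  qed
  have limg: "((\<lambda>h. \<bar>GG b (y h)\<bar> / \<bar>h\<bar> * (norm (y h) / K)) \<longlongrightarrow> 0) (at 0)"
    using tendsto_mult[OF lim1 lim2] by simp
  have main: "((\<lambda>h. norm (c (0 + h) - c 0 - h *\<^sub>R \<tau>) / norm h) \<longlongrightarrow> 0) (at 0)"
  proof (rule tendsto_sandwich[OF _ _ tendsto_const limg])
    show "\<forall>\<^sub>F h in at 0. 0 \<le> norm (c (0 + h) - c 0 - h *\<^sub>R \<tau>) / norm h" by simp
    show "\<forall>\<^sub>F h in at 0. norm (c (0 + h) - c 0 - h *\<^sub>R \<tau>) / norm h
        \<le> \<bar>GG b (y h)\<bar> / \<bar>h\<bar> * (norm (y h) / K)"
    proof (rule always_eventually, rule allI)
      fix h :: real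
      have "c (0 + h) - c 0 - h *\<^sub>R \<tau> = (R h - 1) *\<^sub>R y h"
        using c0 unfolding c_def y_def by (simp add: algebra_simps R0)
      then have "norm (c (0 + h) - c 0 - h *\<^sub>R \<tau>) = (1 - R h) * norm (y h)"
        using R(2)[of h] by simp
      also have "\<dots> \<le> (\<bar>GG b (y h)\<bar> / K) * norm (y h)"
      proof (rule mult_right_mono)
        show "1 - R h \<le> \<bar>GG b (y h)\<bar> / K" using bound[of h] K ynn[of h] by (simp add: field_simps)
      qed simp
      finally have "norm (c (0 + h) - c 0 - h *\<^sub>R \<tau>) \<le> (\<bar>GG b (y h)\<bar> / K) * norm (y h)" .
      then have "norm (c (0 + h) - c 0 - h *\<^sub>R \<tau>) / norm h \<le> ((\<bar>GG b (y h)\<bar> / K) * norm (y h)) / norm h"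
        by (rule divide_right_mono) simp
      also have "((\<bar>GG b (y h)\<bar> / K) * norm (y h)) / norm h = \<bar>GG b (y h)\<bar> / \<bar>h\<bar> * (norm (y h) / K)"
        by simp
      finally show "norm (c (0 + h) - c 0 - h *\<^sub>R \<tau>) / norm h \<le> \<bar>GG b (y h)\<bar> / \<bar>h\<bar> * (norm (y h) / K)" .
    qed
  qed
  have "(c has_vector_derivative \<tau>) (at 0)"
    unfolding has_vector_derivative_def has_derivative_at
    using main by (simp add: bounded_linear_scaleR_left)
  then show ?thesis unfolding tangent_bd_def \<tau>_def[symmetric]
    using cf c0 by blast
qed


lemma deriv_dot_fst:
  assumes "(\<gamma> has_vector_derivative V) (at t within S)"
  shows "((\<lambda>t. dot2 a (fst (\<gamma> t))) has_field_derivative dot2 a (fst V)) (at t within S)"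
proof -
  have d: "(\<gamma> has_derivative (\<lambda>h. h *\<^sub>R V)) (at t within S)"
    using assms by (simp add: has_vector_derivative_def)
  show ?thesis unfolding dot2_def has_field_derivative_def
    apply (rule has_derivative_eq_rhs)
     apply (rule derivative_eq_intros d refl)+
    apply (simp add: fun_eq_iff algebra_simps)
    done
qed

lemma deriv_snd:
  assumes "(\<gamma> has_vector_derivative V) (at t within S)"
  shows "((\<lambda>t. snd (\<gamma> t)) has_derivative (\<lambda>h. h *\<^sub>R snd V)) (at t within S)"
proof -
  have d: "(\<gamma> has_derivative (\<lambda>h. h *\<^sub>R V)) (at t within S)"
    using assms by (simp add: has_vector_derivative_def)
  show ?thesis
    apply (rule has_derivative_eq_rhs)
     apply (rule derivative_eq_intros d refl)+
    apply (simp add: fun_eq_iff)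
    done
qed

lemma zero_deriv_ends:
  fixes f :: "real \<Rightarrow> real"
  assumes "0 \<le> T" "\<And>t. t \<in> {0..T} \<Longrightarrow> (f has_field_derivative 0) (at t within {0..T})"
  shows "f T = f 0"
proof -
  obtain c where "\<forall>x\<in>{0..T}. f x = c"
    using has_field_derivative_zero_constant[of "{0..T}" f] assms by auto
  then show ?thesis using assms(1) by auto
qed

lemma zero_in_tangent: "p \<in> frontier B \<Longrightarrow> 0 \<in> tangent_bd B p"
  unfolding tangent_bd_def
  by (intro CollectI exI[of _ "\<lambda>_. p"]) (auto intro: has_vector_derivative_const)

lemma dot2_self_zero: "dot2 v v = 0 \<Longrightarrow> v = 0"
  unfolding dot2_def by (cases v) (simp add: zero_prod_def sum_squares_eq_zero_iff)

lemma int_vec_max: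
  assumes "k1 \<in> \<int>" "k2 \<in> \<int>" "(k1, k2) \<noteq> (0::real, 0::real)"
  shows "1 \<le> - k1 - k2 \<or> 1 \<le> k1 \<or> 1 \<le> k2"
proof -
  obtain i j :: int where ij: "k1 = of_int i" "k2 = of_int j" using assms(1,2) by (auto elim!: Ints_cases)
  have "i \<noteq> 0 \<or> j \<noteq> 0" using assms(3) ij by auto
  then have "1 \<le> - i - j \<or> 1 \<le> i \<or> 1 \<le> j" by linarith
  then show ?thesis unfolding ij
    by (metis of_int_1_le_iff of_int_diff of_int_minus)
qed

lemma orbit_facts:
  assumes orb: "closed_reeb_orbit B \<gamma> T"
  shows "reeb_action \<gamma> T = T"
    and "snd (\<gamma> 0) \<in> frontier B"
    and "\<And>\<tau>. \<tau> \<in> tangent_bd B (snd (\<gamma> 0)) \<Longrightarrow> dot2 \<tau> (fst (\<gamma> T) - fst (\<gamma> 0)) = 0"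
    and "dot2 (snd (\<gamma> 0)) (fst (\<gamma> T) - fst (\<gamma> 0)) = T"
    and "fst (fst (\<gamma> T) - fst (\<gamma> 0)) \<in> \<int>" "snd (fst (\<gamma> T) - fst (\<gamma> 0)) \<in> \<int>"
proof -
  define S where "S = {0..T}"
  define V where "V t = vector_derivative \<gamma> (at t within S)" for t
  have T: "T > 0" using orb unfolding closed_reeb_orbit_def by simp
  have O: "\<And>t. t \<in> S \<Longrightarrow> \<gamma> differentiable (at t within S) \<and>
        snd (\<gamma> t) \<in> frontier B \<and>
        V t \<in> tangent_hyp B (\<gamma> t) \<and>
        lam_can (\<gamma> t) (V t) = 1 \<and>
        (\<forall>w\<in>tangent_hyp B (\<gamma> t). dlam_can (V t) w = 0)"
    using orb unfolding closed_reeb_orbit_def S_def V_def by blast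
  have dv: "(\<gamma> has_vector_derivative V t) (at t within S)" if "t \<in> S" for t
    using O[OF that] unfolding V_def by (simp add: vector_derivative_works[symmetric])
  have sndV: "snd (V t) = 0" if "t \<in> S" for t
  proof -
    have "(snd (V t), 0) \<in> tangent_hyp B (\<gamma> t)"
      using O[OF that] zero_in_tangent unfolding tangent_hyp_def by auto
    then have "dlam_can (V t) (snd (V t), 0) = 0" using O[OF that] by blast
    then have "dot2 (snd (V t)) (snd (V t)) = 0" unfolding dlam_can_def dot2_def by simp
    then show ?thesis by (rule dot2_self_zero)
  qed
  obtain p0 where p0: "\<forall>t\<in>S. snd (\<gamma> t) = p0"
  proof -
    have "\<exists>c. \<forall>t\<in>S. snd (\<gamma> t) = c"
    proof (rule has_derivative_zero_constant)
      show "convex S" unfolding S_def by simp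
      fix t assume "t \<in> S"
      show "((\<lambda>t. snd (\<gamma> t)) has_derivative (\<lambda>h. 0)) (at t within S)"
        using deriv_snd[OF dv[OF \<open>t \<in> S\<close>]] sndV[OF \<open>t \<in> S\<close>] by simp
    qed
    then show ?thesis using that by blast
  qed
  have S0: "0 \<in> S" and ST: "T \<in> S" unfolding S_def using T by auto
  have p00: "snd (\<gamma> 0) = p0" using p0 S0 by simp
  show "snd (\<gamma> 0) \<in> frontier B" using O[OF S0] by simp
  show "reeb_action \<gamma> T = T"
  proof -
    have "reeb_action \<gamma> T = integral {0..T} (\<lambda>t. 1::real)"
      unfolding reeb_action_def
      by (rule integral_cong) (use O in \<open>auto simp: S_def V_def\<close>)
    then show ?thesis using T by simp
  qed
  show "dot2 \<tau> (fst (\<gamma> T) - fst (\<gamma> 0)) = 0" if tau: "\<tau> \<in> tangent_bd B (snd (\<gamma> 0))" for \<tau>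
  proof -
    have "(\<lambda>t. dot2 \<tau> (fst (\<gamma> t))) T = (\<lambda>t. dot2 \<tau> (fst (\<gamma> t))) 0"
    proof (rule zero_deriv_ends)
      show "0 \<le> T" using T by simp
      fix t assume t: "t \<in> {0..T}"
      then have tS: "t \<in> S" unfolding S_def .
      have "(0, \<tau>) \<in> tangent_hyp B (\<gamma> t)" using tau p0 tS p00 unfolding tangent_hyp_def by auto
      then have "dlam_can (V t) (0, \<tau>) = 0" using O[OF tS] by blast
      then have z: "dot2 \<tau> (fst (V t)) = 0" unfolding dlam_can_def dot2_def by simp
      show "((\<lambda>t. dot2 \<tau> (fst (\<gamma> t))) has_field_derivative 0) (at t within {0..T})"
        using deriv_dot_fst[OF dv[OF tS], of \<tau>] z unfolding S_def by simp
    qed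
    then show ?thesis unfolding dot2_def by (simp add: algebra_simps)
  qed
  show "dot2 (snd (\<gamma> 0)) (fst (\<gamma> T) - fst (\<gamma> 0)) = T"
  proof -
    have "(\<lambda>t. dot2 p0 (fst (\<gamma> t)) - t) T = (\<lambda>t. dot2 p0 (fst (\<gamma> t)) - t) 0"
    proof (rule zero_deriv_ends)
      show "0 \<le> T" using T by simp
      fix t assume t: "t \<in> {0..T}"
      then have tS: "t \<in> S" unfolding S_def .
      have "dot2 p0 (fst (V t)) = 1" using O[OF tS] p0 tS unfolding lam_can_def by auto
      then show "((\<lambda>t. dot2 p0 (fst (\<gamma> t)) - t) has_field_derivative 0) (at t within {0..T})"
        using DERIV_diff[OF deriv_dot_fst[OF dv[OF tS], of p0] DERIV_ident] unfolding S_def by simp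
    qed
    then show ?thesis using p00 unfolding dot2_def by (simp add: algebra_simps)
  qed
  show "fst (fst (\<gamma> T) - fst (\<gamma> 0)) \<in> \<int>" "snd (fst (\<gamma> T) - fst (\<gamma> 0)) \<in> \<int>"
    using orb unfolding closed_reeb_orbit_def by auto
qed


lemma vert_ineq:
  assumes "(b::real) > 2"
  shows "exp (4 - 2*b) + exp (b - 2) + exp (b - 2) \<le> exp b"
proof -
  have a: "exp (4 - 2*b) \<le> exp (b - 2)" using assms by simp
  have e2: "3 \<le> exp (2::real)" using exp_ge_add_one_self[of 2] by simp
  have "exp b = exp (b - 2) * exp 2" by (simp add: exp_add[symmetric])
  moreover have "3 * exp (b - 2) \<le> exp (b - 2) * exp 2" using e2 by simp
  ultimately show ?thesis using a by linarith
qed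

lemma vertices_in:
  assumes b: "b > 2"
  shows "(1 - 2/b) *\<^sub>R ((-1,-1)::pt2) \<in> Abody b"
    "(1 - 2/b) *\<^sub>R ((1,0)::pt2) \<in> Abody b"
    "(1 - 2/b) *\<^sub>R ((0,1)::pt2) \<in> Abody b"
proof -
  have bb: "b * (1 - 2/b) = b - 2" using b by (simp add: field_simps)
  have m: "b * (-(2 * (1 - 2/b))) = 4 - 2*b" using b by (simp add: field_simps)
  show "(1 - 2/b) *\<^sub>R ((-1,-1)::pt2) \<in> Abody b"
  proof -
    have "b * L1 ((1 - 2/b) *\<^sub>R ((-1,-1)::pt2)) = 4 - 2*b"
      using m unfolding L1_def by simp
    moreover have "b * L2 ((1 - 2/b) *\<^sub>R ((-1,-1)::pt2)) = b - 2"
      using bb unfolding L2_def by simp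
    moreover have "b * L3 ((1 - 2/b) *\<^sub>R ((-1,-1)::pt2)) = b - 2"
      using bb unfolding L3_def by simp
    ultimately show ?thesis using vert_ineq[OF b] unfolding Abody_def GG_def by simp
  qed
  show "(1 - 2/b) *\<^sub>R ((1,0)::pt2) \<in> Abody b"
  proof -
    have "b * L1 ((1 - 2/b) *\<^sub>R ((1,0)::pt2)) = b - 2"
      using bb unfolding L1_def by simp
    moreover have "b * L2 ((1 - 2/b) *\<^sub>R ((1,0)::pt2)) = b - 2"
      using bb unfolding L2_def by simp
    moreover have "b * L3 ((1 - 2/b) *\<^sub>R ((1,0)::pt2)) = 4 - 2*b"
      using m unfolding L3_def by simp
    ultimately show ?thesis using vert_ineq[OF b] unfolding Abody_def GG_def by simp
  qed
  show "(1 - 2/b) *\<^sub>R ((0,1)::pt2) \<in> Abody b"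
  proof -
    have "b * L1 ((1 - 2/b) *\<^sub>R ((0,1)::pt2)) = b - 2"
      using bb unfolding L1_def by simp
    moreover have "b * L2 ((1 - 2/b) *\<^sub>R ((0,1)::pt2)) = 4 - 2*b"
      using m unfolding L2_def by simp
    moreover have "b * L3 ((1 - 2/b) *\<^sub>R ((0,1)::pt2)) = b - 2"
      using bb unfolding L3_def by simp
    ultimately show ?thesis using vert_ineq[OF b] unfolding Abody_def GG_def by simp
  qed
qed

lemma cross_id:
  fixes k1 k2 g1 g2 p1 p2 x1 x2 :: real
  assumes "- g2 * k1 + g1 * k2 = 0"
  shows "(k1*x1 + k2*x2) * (g1*p1 + g2*p2) = (k1*p1 + k2*p2) * (g1*x1 + g2*x2)"
proof -
  have "(k1*x1 + k2*x2) * (g1*p1 + g2*p2) - (k1*p1 + k2*p2) * (g1*x1 + g2*x2)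
      = (g1 * k2 - g2 * k1) * (x2 * p1 - x1 * p2)" by (simp add: algebra_simps)
  then show ?thesis using assms by simp
qed

lemma orbit_lower:
  assumes b: "b > 2" and orb: "closed_reeb_orbit (Abody b) \<gamma> T"
  shows "reeb_action \<gamma> T \<ge> 1 - 2/b"
proof -
  note F = orbit_facts[OF orb]
  define p where "p = snd (\<gamma> 0)"
  define k where "k = fst (\<gamma> T) - fst (\<gamma> 0)"
  have T: "T > 0" using orb unfolding closed_reeb_orbit_def by simp
  have p0: "GG b p = 0" using F(2) frontier_Abody[OF b] unfolding p_def by simp
  have "dot2 (- G2 b p, G1 b p) k = 0"
    using F(3)[OF tangent_exists[OF b p0[unfolded p_def]]] unfolding p_def k_def by simp
  then have cr: "- G2 b p * fst k + G1 b p * snd k = 0" unfolding dot2_def by simp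
  have Tk: "fst k * fst p + snd k * snd p = T" using F(4) unfolding dot2_def p_def k_def by (simp add: mult.commute)
  define D where "D = G1 b p * fst p + G2 b p * snd p"
  have D: "D > 0" unfolding D_def using grad_dot_ge[OF p0] expb_gt3[OF b] by simp
  have kx: "fst k * fst x + snd k * snd x \<le> T" if x: "x \<in> Abody b" for x
  proof -
    have "GG b p + (G1 b p * (fst x - fst p) + G2 b p * (snd x - snd p)) \<le> GG b x" by (rule GG_tangent)
    then have gx: "G1 b p * fst x + G2 b p * snd x \<le> D" using x p0 unfolding Abody_def D_def
      by (simp add: algebra_simps)
    have "(fst k * fst x + snd k * snd x) * D = T * (G1 b p * fst x + G2 b p * snd x)"
      unfolding D_def Tk[symmetric] by (rule cross_id[OF cr])
    also have "\<dots> \<le> T * D" using gx T by (simp add: mult_left_mono)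
    finally show ?thesis using D by simp
  qed
  have kz: "(fst k, snd k) \<noteq> (0, 0)" using Tk T by auto
  have ints: "fst k \<in> \<int>" "snd k \<in> \<int>" using F(5,6) unfolding k_def by auto
  have d: "0 \<le> 1 - 2/b" using b by simp
  have v1: "(1 - 2/b) * (- fst k - snd k) \<le> T" using kx[OF vertices_in(1)[OF b]] by (simp add: algebra_simps)
  have v2: "(1 - 2/b) * fst k \<le> T" using kx[OF vertices_in(2)[OF b]] by (simp add: algebra_simps)
  have v3: "(1 - 2/b) * snd k \<le> T" using kx[OF vertices_in(3)[OF b]] by (simp add: algebra_simps)
  have "1 - 2/b \<le> T"
    using int_vec_max[OF ints kz]
  proof (elim disjE)
    assume "1 \<le> - fst k - snd k"
    then have "(1 - 2/b) * 1 \<le> (1 - 2/b) * (- fst k - snd k)" using d by (intro mult_left_mono)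
    then show ?thesis using v1 by simp
  next
    assume "1 \<le> fst k"
    then have "(1 - 2/b) * 1 \<le> (1 - 2/b) * fst k" using d by (intro mult_left_mono)
    then show ?thesis using v2 by simp
  next
    assume "1 \<le> snd k"
    then have "(1 - 2/b) * 1 \<le> (1 - 2/b) * snd k" using d by (intro mult_left_mono)
    then show ?thesis using v3 by simp
  qed
  then show ?thesis using F(1) by simp
qed


lemma tangent_fst_zero:
  assumes "\<tau> \<in> tangent_bd B p" "\<And>x. x \<in> frontier B \<Longrightarrow> fst x \<le> fst p"
  shows "fst \<tau> = 0"
proof -
  obtain c where c: "\<forall>s. c s \<in> frontier B" "c 0 = p" "(c has_vector_derivative \<tau>) (at 0)"
    using assms(1) unfolding tangent_bd_def by blast
  have d: "(c has_derivative (\<lambda>h. h *\<^sub>R \<tau>)) (at 0)" using c(3) by (simp add: has_vector_derivative_def)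
  have "((\<lambda>s. fst (c s)) has_derivative (\<lambda>h. fst \<tau> * h)) (at 0)"
    apply (rule has_derivative_eq_rhs)
     apply (rule derivative_eq_intros d refl)+
    apply (simp add: fun_eq_iff mult.commute)
    done
  then have der: "DERIV (\<lambda>s. fst (c s)) 0 :> fst \<tau>"
    by (simp add: has_field_derivative_def)
  have le: "\<forall>y. \<bar>0 - y\<bar> < 1 \<longrightarrow> fst (c y) \<le> fst (c 0)"
    using c(1,2) assms(2) by auto
  show ?thesis by (rule DERIV_local_max[OF der zero_less_one le])
qed

lemma exists_orbit:
  assumes b: "b > 2"
  shows "\<exists>\<gamma> T. closed_reeb_orbit (Abody b) \<gamma> T \<and> T \<le> 1"
proof -
  have cpt: "compact (Abody b)" using b by (simp add: Abody_compact)
  have int0: "(0,0) \<in> interior (Abody b)" by (rule zero_interior[OF b])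
  then have ne: "Abody b \<noteq> {}" using interior_subset by blast
  have cf: "continuous_on (Abody b) fst" by (intro continuous_intros)
  obtain p where p: "p \<in> Abody b" and pmax: "\<And>y. y \<in> Abody b \<Longrightarrow> fst y \<le> fst p"
    using continuous_attains_sup[OF cpt ne cf] by blast
  obtain e where e: "e > 0" "ball (0,0) e \<subseteq> Abody b" using int0 mem_interior by blast
  have dd: "dist (0,0) (e/2,0::real) = e/2" using e by (simp add: dist_Pair_Pair)
  have "(e/2, 0::real) \<in> ball (0,0) e" unfolding mem_ball using dd e by linarith
  then have "fst p \<ge> e/2" using pmax[of "(e/2,0)"] e by auto
  then have p1: "fst p > 0" using e by simp
  have p1le: "fst p \<le> 1" using Abody_sub[OF _ p] b unfolding L1_def L2_def by force
  have pfr: "p \<in> frontier (Abody b)"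
  proof -
    have "p \<notin> interior (Abody b)"
    proof
      assume "p \<in> interior (Abody b)"
      then obtain e' where e': "e' > 0" "ball p e' \<subseteq> Abody b" using mem_interior by blast
      have "p + (e'/2, 0) \<in> ball p e'" using e' by (simp add: dist_norm norm_Pair)
      then have "fst (p + (e'/2, 0)) \<le> fst p" using pmax e' by blast
      then show False using e' by simp
    qed
    then show ?thesis using p closure_subset unfolding frontier_def by auto
  qed
  have frle: "fst x \<le> fst p" if "x \<in> frontier (Abody b)" for x
    using pmax that Abody_closed frontier_subset_closed by blast
  define T where "T = fst p"
  define ci where "ci = 1 / T"
  define \<gamma> where "\<gamma> t = ((t * ci, 0::real), p)" for t
  define V where "V = ((ci, 0::real), (0::pt2))"
  have T: "T > 0" unfolding T_def using p1 .
  have hv: "(\<gamma> has_vector_derivative V) (at t within {0..T})" for t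
    unfolding has_vector_derivative_def \<gamma>_def V_def
    apply (rule has_derivative_eq_rhs)
     apply (rule derivative_eq_intros refl)+
    apply (simp add: fun_eq_iff zero_prod_def)
    done
  have vd: "vector_derivative \<gamma> (at t within {0..T}) = V" if "t \<in> {0..T}" for t
    by (rule vector_derivative_within_closed_interval[OF T that hv])
  have orb: "closed_reeb_orbit (Abody b) \<gamma> T"
    unfolding closed_reeb_orbit_def
  proof (intro conjI ballI)
    show "0 < T" by (rule T)
    fix t assume t: "t \<in> {0..T}"
    show "\<gamma> differentiable at t within {0..T}" using hv differentiableI_vector by blast
    show "snd (\<gamma> t) \<in> frontier (Abody b)" using pfr by (simp add: \<gamma>_def)
    show "vector_derivative \<gamma> (at t within {0..T}) \<in> tangent_hyp (Abody b) (\<gamma> t)"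
      unfolding vd[OF t] tangent_hyp_def V_def \<gamma>_def using zero_in_tangent[OF pfr] by simp
    show "lam_can (\<gamma> t) (vector_derivative \<gamma> (at t within {0..T})) = 1"
      unfolding vd[OF t] lam_can_def V_def \<gamma>_def dot2_def ci_def using T by (simp add: T_def)
    fix w assume w: "w \<in> tangent_hyp (Abody b) (\<gamma> t)"
    then have "snd w \<in> tangent_bd (Abody b) p" unfolding tangent_hyp_def \<gamma>_def by auto
    then have "fst (snd w) = 0" using tangent_fst_zero frle by blast
    then show "dlam_can (vector_derivative \<gamma> (at t within {0..T})) w = 0"
      unfolding vd[OF t] dlam_can_def V_def dot2_def by simp
  next
    show "snd (\<gamma> T) = snd (\<gamma> 0)" by (simp add: \<gamma>_def)
    show "fst (fst (\<gamma> T)) - fst (fst (\<gamma> 0)) \<in> \<int>" using T by (simp add: \<gamma>_def ci_def)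
    show "snd (fst (\<gamma> T)) - snd (fst (\<gamma> 0)) \<in> \<int>" by (simp add: \<gamma>_def)
  qed
  then show ?thesis using p1le unfolding T_def by blast
qed

lemma sys_bounds:
  assumes b: "b > 2"
  shows "1 - 2/b \<le> sys (Abody b)" "sys (Abody b) \<le> 1"
proof -
  define A where "A = {reeb_action \<gamma> T | \<gamma> T. closed_reeb_orbit (Abody b) \<gamma> T}"
  obtain \<gamma> T where o: "closed_reeb_orbit (Abody b) \<gamma> T" "T \<le> 1" using exists_orbit[OF b] by blast
  have inA: "reeb_action \<gamma> T \<in> A" unfolding A_def using o by blast
  have ne: "A \<noteq> {}" using inA by blast
  have lb: "\<And>a. a \<in> A \<Longrightarrow> 1 - 2/b \<le> a" unfolding A_def using orbit_lower[OF b] by blast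
  show "1 - 2/b \<le> sys (Abody b)" unfolding sys_def A_def[symmetric] by (rule cInf_greatest[OF ne lb])
  have bdd: "bdd_below A" using lb by (rule bdd_belowI)
  have "Inf A \<le> reeb_action \<gamma> T" by (rule cInf_lower[OF inA bdd])
  also have "\<dots> = T" using orbit_facts(1)[OF o(1)] .
  finally show "sys (Abody b) \<le> 1" unfolding sys_def A_def[symmetric] using o(2) by simp
qed


definition hat :: "real \<Rightarrow> real" where
  "hat x = max 0 (min (1 - x) (1 + 2*x) - (x - 1)/2)"

lemma hat_int: "(hat has_integral 3/2) UNIV"
proof -
  have i1: "((\<lambda>x. 3/2 - 3/2*x) has_integral (3/4)) {0..1::real}"
  proof -
    have "((\<lambda>x. 3/2 - 3/2*x) has_integral ((\<lambda>x. 3/2*x - 3/4*x^2) 1 - (\<lambda>x. 3/2*x - 3/4*x^2) 0)) {0..1::real}"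
    proof (rule fundamental_theorem_of_calculus)
      fix x :: real assume "x \<in> {0..1}"
      have "((\<lambda>x. 3/2*x - 3/4*x^2) has_real_derivative (3/2 - 3/2*x)) (at x within {0..1})"
        by (rule derivative_eq_intros refl)+ (simp add: algebra_simps)
      then show "((\<lambda>x. 3/2*x - 3/4*x^2) has_vector_derivative (3/2 - 3/2*x)) (at x within {0..1})"
        by (simp add: has_real_derivative_iff_has_vector_derivative)
    qed simp
    then show ?thesis by simp
  qed
  have i2: "((\<lambda>x. 3/2 + 3/2*x) has_integral (3/4)) {-1..0::real}"
  proof -
    have "((\<lambda>x. 3/2 + 3/2*x) has_integral ((\<lambda>x. 3/2*x + 3/4*x^2) 0 - (\<lambda>x. 3/2*x + 3/4*x^2) (-1))) {-1..0::real}"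
    proof (rule fundamental_theorem_of_calculus)
      fix x :: real assume "x \<in> {-1..0}"
      have "((\<lambda>x. 3/2*x + 3/4*x^2) has_real_derivative (3/2 + 3/2*x)) (at x within {-1..0})"
        by (rule derivative_eq_intros refl)+ (simp add: algebra_simps)
      then show "((\<lambda>x. 3/2*x + 3/4*x^2) has_vector_derivative (3/2 + 3/2*x)) (at x within {-1..0})"
        by (simp add: has_real_derivative_iff_has_vector_derivative)
    qed simp
    then show ?thesis by simp
  qed
  have j1: "(hat has_integral (3/4)) {0..1}"
    by (rule has_integral_eq[OF _ i1]) (auto simp: hat_def min_def max_def field_simps)
  have j2: "(hat has_integral (3/4)) {-1..0}"
    by (rule has_integral_eq[OF _ i2]) (auto simp: hat_def min_def max_def field_simps)
  have "(hat has_integral (3/4 + 3/4)) {-1..1}"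
    by (rule has_integral_combine[of "-1" 0 1]) (use j1 j2 in auto)
  then have "(hat has_integral 3/2) {-1..1}" by simp
  then show ?thesis
    by (rule has_integral_on_superset) (auto simp: hat_def)
qed

lemma triangle_slice: "Pair x -` triangleA = {(x - 1)/2 .. min (1 - x) (1 + 2*x)}"
  unfolding triangle_eq L1_def L2_def L3_def by auto

lemma triangle_closed: "closed triangleA"
  using triangle_compact compact_imp_closed by blast

lemma triangle_measure: "measure lebesgue triangleA = 3/2"
proof -
  have tb: "triangleA \<in> sets lborel" using triangle_closed by simp
  have "emeasure lborel triangleA = emeasure (lborel \<Otimes>\<^sub>M lborel) triangleA"
    by (simp add: lborel_prod)
  also have "\<dots> = (\<integral>\<^sup>+x. emeasure lborel (Pair x -` triangleA) \<partial>lborel)"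
    by (rule lborel.emeasure_pair_measure_alt) (simp only: lborel_prod tb)
  also have "\<dots> = (\<integral>\<^sup>+x. ennreal (hat x) * indicator UNIV x \<partial>lborel)"
    by (rule nn_integral_cong) (auto simp: triangle_slice hat_def emeasure_lborel_Icc_eq max_def)
  also have "\<dots> = ennreal (3/2)"
    by (rule nn_integral_has_integral_lebesgue'[OF _ hat_int]) (simp add: hat_def)
  finally have "emeasure lborel triangleA = ennreal (3/2)" .
  then have "measure lborel triangleA = 3/2" by (simp add: measure_def)
  then show ?thesis using tb by simp
qed


lemma Abody_measure:
  assumes b: "b > 2"
  shows "measure lebesgue (triangleA - Abody b) \<le> 6 / b"
    and "measure lebesgue (Abody b) = 3/2 - measure lebesgue (triangleA - Abody b)"
    and "measure lebesgue (Abody b) \<le> 3/2"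
proof -
  define s where "s = 1 - 2/b"
  have s: "0 < s" "s \<le> 1" using b unfolding s_def by (auto simp: field_simps)
  define Sc where "Sc = (\<lambda>x. s *\<^sub>R x + 0) ` triangleA"
  have mSc: "measure lebesgue Sc = s^2 * (3/2)"
    unfolding Sc_def using measure_lebesgue_affine[of s 0 triangleA] triangle_measure s by (simp add: power2_eq_square)
  have Sc_sub: "Sc \<subseteq> Abody b"
  proof -
    have "Sc = convex hull ((\<lambda>x. s *\<^sub>R x) ` {(-1,-1), (1,0), (0,1)})"
      unfolding Sc_def triangleA_def by (subst convex_hull_scaling) simp
    also have "\<dots> \<subseteq> Abody b"
    proof (rule hull_minimal)
      show "(\<lambda>x. s *\<^sub>R x) ` {(-1,-1), (1,0), (0,1)} \<subseteq> Abody b"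
        using vertices_in[OF b] unfolding s_def by auto
      show "convex (Abody b)" by (rule Abody_convex)
    qed
    finally show ?thesis .
  qed
  have tl: "triangleA \<in> lmeasurable" by (rule lmeasurable_compact[OF triangle_compact])
  have al: "Abody b \<in> lmeasurable" using b by (intro lmeasurable_compact Abody_compact) simp
  have scl: "Sc \<in> lmeasurable" unfolding Sc_def
    by (intro lmeasurable_compact compact_continuous_image triangle_compact continuous_intros)
  have asub: "Abody b \<subseteq> triangleA" using Abody_subset b by simp
  have scsub: "Sc \<subseteq> triangleA" using Sc_sub asub by blast
  have fin: "emeasure lebesgue triangleA \<noteq> \<infinity>" using fmeasurableD2[OF tl] by simp
  have d1: "measure lebesgue (triangleA - Abody b) = 3/2 - measure lebesgue (Abody b)"
    using measure_Diff[OF fin _ _ asub] tl al triangle_measure by auto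
  have d2: "measure lebesgue (triangleA - Sc) = 3/2 - s^2 * (3/2)"
    using measure_Diff[OF fin _ _ scsub] tl scl triangle_measure mSc by auto
  have "measure lebesgue (triangleA - Abody b) \<le> measure lebesgue (triangleA - Sc)"
    by (rule measure_mono_fmeasurable) (use Sc_sub tl scl al in \<open>auto intro: fmeasurable.Diff\<close>)
  also have "\<dots> = 3/2 - s^2 * (3/2)" by (rule d2)
  also have "\<dots> \<le> 6 / b"
  proof -
    have "3/2 - s^2 * (3/2) = (3/2) * (1 - s) * (1 + s)" by (simp add: algebra_simps power2_eq_square)
    also have "\<dots> \<le> (3/2) * (2/b) * 2"
      using s b unfolding s_def by (intro mult_mono) (auto simp: field_simps)
    also have "\<dots> = 6 / b" by simp
    finally show ?thesis .
  qed
  finally show "measure lebesgue (triangleA - Abody b) \<le> 6 / b" .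
  show "measure lebesgue (Abody b) = 3/2 - measure lebesgue (triangleA - Abody b)" using d1 by simp
  have "measure lebesgue (triangleA - Abody b) \<ge> 0" by simp
  then show "measure lebesgue (Abody b) \<le> 3/2" using d1 by simp
qed


lemma eps_bounds:
  fixes \<epsilon> :: real
  assumes e: "0 < \<epsilon>" "\<epsilon> < 1/4"
  shows "Abody (1/\<epsilon>\<^sup>2) \<subseteq> triangleA \<and> compact (Abody (1/\<epsilon>\<^sup>2)) \<and> convex (Abody (1/\<epsilon>\<^sup>2)) \<and>
        smooth_boundary (Abody (1/\<epsilon>\<^sup>2)) \<and> (0,0) \<in> interior (Abody (1/\<epsilon>\<^sup>2)) \<and>
        measure lebesgue (triangleA - Abody (1/\<epsilon>\<^sup>2)) \<le> 12 * \<epsilon>\<^sup>2 \<and>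
        12 * \<epsilon>\<^sup>2 < 3 \<and>
        (1 - 2 * \<epsilon>)\<^sup>2 / 3 \<le> rho_sys (Abody (1/\<epsilon>\<^sup>2)) \<and>
        rho_sys (Abody (1/\<epsilon>\<^sup>2)) \<le> 1 / (3 - 12 * \<epsilon>\<^sup>2)"
proof -
  define b where "b = 1/\<epsilon>\<^sup>2"
  have "\<epsilon>\<^sup>2 < (1/4)\<^sup>2" using e by (intro power_strict_mono) auto
  then have e2: "\<epsilon>\<^sup>2 < 1/16" by (simp add: power2_eq_square)
  have e2p: "\<epsilon>\<^sup>2 > 0" using e by simp
  have b: "b > 2"
  proof -
    have "2 * \<epsilon>\<^sup>2 < 1" using e2 by simp
    then show ?thesis unfolding b_def using e2p by (simp add: field_simps)
  qed
  have b0: "b > 0" using b by simp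
  have inv: "2 / b = 2 * \<epsilon>\<^sup>2" "6 / b = 6 * \<epsilon>\<^sup>2" unfolding b_def by simp_all
  define \<sigma> where "\<sigma> = sys (Abody b)"
  define m where "m = measure lebesgue (Abody b)"
  define d where "d = measure lebesgue (triangleA - Abody b)"
  have s1: "1 - 2 * \<epsilon>\<^sup>2 \<le> \<sigma>" using sys_bounds(1)[OF b] inv unfolding \<sigma>_def by simp
  have s2: "\<sigma> \<le> 1" using sys_bounds(2)[OF b] unfolding \<sigma>_def .
  have dle: "d \<le> 6 * \<epsilon>\<^sup>2" using Abody_measure(1)[OF b] inv unfolding d_def by simp
  have md: "m = 3/2 - d" using Abody_measure(2)[OF b] unfolding m_def d_def .
  have mle: "m \<le> 3/2" using Abody_measure(3)[OF b] unfolding m_def .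
  have e2e: "2 * \<epsilon>\<^sup>2 \<le> 2 * \<epsilon>" using e by (simp add: power2_eq_square)
  have ge0: "0 \<le> 1 - 2 * \<epsilon>" using e by simp
  have sig: "1 - 2 * \<epsilon> \<le> \<sigma>" using s1 e2e by linarith
  have den: "0 < 3 - 12 * \<epsilon>\<^sup>2" using e2 by simp
  have twom: "3 - 12 * \<epsilon>\<^sup>2 \<le> 2 * m" using md dle by simp
  have mpos: "0 < 2 * m" using twom den by linarith
  have rho: "rho_sys (Abody b) = \<sigma>\<^sup>2 / (2 * m)" unfolding rho_sys_def \<sigma>_def m_def ..
  have low: "(1 - 2 * \<epsilon>)\<^sup>2 / 3 \<le> \<sigma>\<^sup>2 / (2 * m)"
  proof -
    have "(1 - 2 * \<epsilon>)\<^sup>2 \<le> \<sigma>\<^sup>2" using sig ge0 by (rule power_mono)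
    then have "(1 - 2 * \<epsilon>)\<^sup>2 / 3 \<le> \<sigma>\<^sup>2 / 3" by simp
    also have "\<dots> \<le> \<sigma>\<^sup>2 / (2 * m)" using mle mpos by (intro divide_left_mono) auto
    finally show ?thesis .
  qed
  have up: "\<sigma>\<^sup>2 / (2 * m) \<le> 1 / (3 - 12 * \<epsilon>\<^sup>2)"
  proof -
    have "0 \<le> \<sigma>" using sig ge0 by linarith
    then have "\<sigma>\<^sup>2 \<le> 1\<^sup>2" using s2 by (intro power_mono)
    then have "\<sigma>\<^sup>2 / (2 * m) \<le> 1 / (2 * m)" using mpos by (intro divide_right_mono) auto
    also have "\<dots> \<le> 1 / (3 - 12 * \<epsilon>\<^sup>2)" using twom den by (intro divide_left_mono) auto
    finally show ?thesis .
  qed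
  show ?thesis unfolding b_def[symmetric]
  proof (intro conjI)
    show "Abody b \<subseteq> triangleA" by (rule Abody_subset[OF b0])
    show "compact (Abody b)" by (rule Abody_compact[OF b0])
    show "convex (Abody b)" by (rule Abody_convex)
    show "smooth_boundary (Abody b)" by (rule Abody_smooth[OF b])
    show "(0,0) \<in> interior (Abody b)" by (rule zero_interior[OF b])
    show "measure lebesgue (triangleA - Abody b) \<le> 12 * \<epsilon>\<^sup>2" using dle e2p unfolding d_def by linarith
    show "12 * \<epsilon>\<^sup>2 < 3" using e2 by linarith
    show "(1 - 2 * \<epsilon>)\<^sup>2 / 3 \<le> rho_sys (Abody b)" unfolding rho by (rule low)
    show "rho_sys (Abody b) \<le> 1 / (3 - 12 * \<epsilon>\<^sup>2)" unfolding rho by (rule up)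
  qed
qed

theorem mainTheorem19:
  shows "\<exists>\<epsilon>0>0. \<exists>C. \<exists>Aeps :: real \<Rightarrow> pt2 set.
     (\<forall>\<epsilon>. 0 < \<epsilon> \<and> \<epsilon> < \<epsilon>0 \<longrightarrow>
        Aeps \<epsilon> \<subseteq> triangleA \<and> compact (Aeps \<epsilon>) \<and> convex (Aeps \<epsilon>) \<and>
        smooth_boundary (Aeps \<epsilon>) \<and> (0,0) \<in> interior (Aeps \<epsilon>) \<and>
        measure lebesgue (triangleA - Aeps \<epsilon>) \<le> C * \<epsilon>\<^sup>2 \<and>
        C * \<epsilon>\<^sup>2 < 3 \<and>
        (1 - 2 * \<epsilon>)\<^sup>2 / 3 \<le> rho_sys (Aeps \<epsilon>) \<and>
        rho_sys (Aeps \<epsilon>) \<le> 1 / (3 - C * \<epsilon>\<^sup>2)) \<and>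
     ((\<lambda>\<epsilon>. rho_sys (Aeps \<epsilon>)) \<longlongrightarrow> 1/3) (at_right 0)"
proof -
  have A: "\<forall>\<epsilon>. 0 < \<epsilon> \<and> \<epsilon> < 1/4 \<longrightarrow>
        Abody (1/\<epsilon>\<^sup>2) \<subseteq> triangleA \<and> compact (Abody (1/\<epsilon>\<^sup>2)) \<and> convex (Abody (1/\<epsilon>\<^sup>2)) \<and>
        smooth_boundary (Abody (1/\<epsilon>\<^sup>2)) \<and> (0,0) \<in> interior (Abody (1/\<epsilon>\<^sup>2)) \<and>
        measure lebesgue (triangleA - Abody (1/\<epsilon>\<^sup>2)) \<le> 12 * \<epsilon>\<^sup>2 \<and>
        12 * \<epsilon>\<^sup>2 < 3 \<and>
        (1 - 2 * \<epsilon>)\<^sup>2 / 3 \<le> rho_sys (Abody (1/\<epsilon>\<^sup>2)) \<and>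
        rho_sys (Abody (1/\<epsilon>\<^sup>2)) \<le> 1 / (3 - 12 * \<epsilon>\<^sup>2)"
    using eps_bounds by blast
  have ev: "\<forall>\<^sub>F \<epsilon> in at_right (0::real). 0 < \<epsilon> \<and> \<epsilon> < 1/4"
    unfolding eventually_at_right_field by (intro exI[of _ "1/4"]) auto
  have B: "((\<lambda>\<epsilon>. rho_sys (Abody (1/\<epsilon>\<^sup>2))) \<longlongrightarrow> 1/3) (at_right 0)"
  proof (rule tendsto_sandwich)
    show "\<forall>\<^sub>F \<epsilon> in at_right 0. (1 - 2 * \<epsilon>)\<^sup>2 / 3 \<le> rho_sys (Abody (1/\<epsilon>\<^sup>2))"
      using ev by eventually_elim (use A in blast)
    show "\<forall>\<^sub>F \<epsilon> in at_right 0. rho_sys (Abody (1/\<epsilon>\<^sup>2)) \<le> 1 / (3 - 12 * \<epsilon>\<^sup>2)"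
      using ev by eventually_elim (use A in blast)
    have "((\<lambda>\<epsilon>::real. (1 - 2 * \<epsilon>)\<^sup>2 / 3) \<longlongrightarrow> (1 - 2 * 0)\<^sup>2 / 3) (at_right 0)"
      by (intro tendsto_intros) simp
    then show "((\<lambda>\<epsilon>::real. (1 - 2 * \<epsilon>)\<^sup>2 / 3) \<longlongrightarrow> 1/3) (at_right 0)" by simp
    have "((\<lambda>\<epsilon>::real. 1 / (3 - 12 * \<epsilon>\<^sup>2)) \<longlongrightarrow> 1 / (3 - 12 * (0::real)\<^sup>2)) (at_right 0)"
      by (intro tendsto_intros) auto
    then show "((\<lambda>\<epsilon>::real. 1 / (3 - 12 * \<epsilon>\<^sup>2)) \<longlongrightarrow> 1/3) (at_right 0)" by simp
  qed
  show ?thesis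
    apply (rule exI[of _ "1/4"])
    apply (rule conjI)
     apply simp
    apply (rule exI[of _ 12])
    apply (rule exI[of _ "\<lambda>\<epsilon>. Abody (1/\<epsilon>\<^sup>2)"])
    using A B by blast
qed


end
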